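(* Let $d$ be a defined $n$-ary operator and let $e_1,\ldots,e_n$ be expressions. Let $i\in\{1,\ldots,n\}$ be such that $e_i$ is rigid. Let $\mathcal{M}$ be a Kripke model and $w$ a state of $\mathcal{M}$, and let $x$ be a rigid variable that does not occur free in any $e_j$. Then $$[\![d(e_1,\ldots,e_n)]\!]^\mathcal{M}_w=[\![d(e_1,\ldots,e_{i-1},x,e_{i+1},\ldots,e_n)]\!]^{\mathcal{M}'}_w,$$ where $\mathcal{M}'$ agrees with $\mathcal{M}$ except that its valuation of rigid variables maps $x$ to $[\![e_i]\!]^\mathcal{M}_w$.
   Context: FOML syntax. Fix disjoint, non-empty, denumerable sets $\mathcal{X}$ (rigid variables), $\mathcal{V}$ (flexible variables) and $\mathcal{O}$ (operator symbols with arities). Expressions are given by $e ::= x \mid v \mid op(e,\ldots,e) \mid e=e \mid \mathrm{FALSE} \mid e\Rightarrow e \mid \forall x:e \mid \nabla e \mid d(e,\ldots,e)$, where $d$ ranges over defined operators. Only rigid variables are bound. Operator definitions. A definition has the form $d(x_1,\ldots,x_n)\triangleq e$, where: - $d$ is a fresh symbol; - $x_1,\ldots,x_n$ are pairwise distinct rigid variables; - $e$ is an expression, possibly using flexible variables and previously defined operators, whose free rigid variables are among $x_1,\ldots,x_n$. An expression is rigid iff, after all defined operators are fully expanded, it contains no flexible variable and no subexpression $\nabla e$. Semantics. A Kripke model is $\mathcal{M}=(\mathcal{I},\xi,\mathcal{W},R,\zeta,\nabla_\mathcal{M})$, where: - $\mathcal{I}$ is a first-order interpretation with distinct values $\mathsf{tt},\mathsf{ff}$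 in its universe; - $\xi:\mathcal{X}\to|\mathcal{I}|$; - $\mathcal{W}$ is a non-empty set of states and $R\subseteq\mathcal{W}^2$; - $\zeta:\mathcal{V}\times\mathcal{W}\to|\mathcal{I}|$; - $\nabla_\mathcal{M}:2^{|\mathcal{I}|}\to|\mathcal{I}|$ satisfies $\nabla_\mathcal{M}(S)=\mathsf{tt}$ iff $S\subseteq\{\mathsf{tt}\}$. Values are defined as follows. - $[\![x]\!]_w=\xi(x)$ and $[\![v]\!]_w=\zeta(v,w)$. - $[\![op(\vec e)]\!]_w=\mathcal{I}(op)(\ldots)$. - $[\![e_1=e_2]\!]_w$ is $\mathsf{tt}$ iff the values are equal, and $\mathsf{ff}$ otherwise. - $[\![\mathrm{FALSE}]\!]_w=\mathsf{ff}$. - $[\![\varphi\Rightarrow\psi]\!]_w=\mathsf{tt}$ iff $[\![\varphi]\!]_w\ne\mathsf{tt}$ or $[\![\psi]\!]_w=\mathsf{tt}$, and $\mathsf{ff}$ otherwise. - $\forall$ quantifies over the rigid variable valuation only, as usual. - $[\![\nabla\varphi]\!]_w=\nabla_\mathcal{M}(\{[\![\varphi]\!]_{w'}:(w,w')\in R\})$. - For $d(x_1,\ldots,x_n)\triangleq e$, $[\![d(e_1,\ldots,e_n)]\!]^\mathcal{M}_w=[\![e[e_1/x_1,\ldots,e_n/x_n]]\!]^\mathcal{M}_w$, using capture-avoiding substitution. *)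

theory Defs
  imports Main
begin

text \<open>Rigid variables are natural numbers (a denumerable set), flexible variables
  have type 'v, operator symbols type 'o (arities given by a function ar),
  defined operator names type 'd.\<close>

datatype ('v, 'o, 'd) expr =
    RVar nat
  | FVar 'v
  | Op 'o "('v, 'o, 'd) expr list"
  | Eq "('v, 'o, 'd) expr" "('v, 'o, 'd) expr"
  | FALSE
  | Imp "('v, 'o, 'd) expr" "('v, 'o, 'd) expr"
  | All nat "('v, 'o, 'd) expr"
  | Nabla "('v, 'o, 'd) expr"
  | Def 'd "('v, 'o, 'd) expr list"

fun fv :: "('v, 'o, 'd) expr \<Rightarrow> nat set" where
  "fv (RVar x) = {x}"
| "fv (FVar v) = {}"
| "fv (Op p es) = (\<Union>e \<in> set es. fv e)"
| "fv (Eq a b) = fv a \<union> fv b"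
| "fv FALSE = {}"
| "fv (Imp a b) = fv a \<union> fv b"
| "fv (All x e) = fv e - {x}"
| "fv (Nabla e) = fv e"
| "fv (Def d es) = (\<Union>e \<in> set es. fv e)"

definition fresh :: "nat set \<Rightarrow> nat" where
  "fresh S = Suc (Max (insert 0 S))"

fun subst :: "(nat \<Rightarrow> ('v, 'o, 'd) expr) \<Rightarrow> ('v, 'o, 'd) expr \<Rightarrow> ('v, 'o, 'd) expr" where
  "subst \<sigma> (RVar x) = \<sigma> x"
| "subst \<sigma> (FVar v) = FVar v"
| "subst \<sigma> (Op p es) = Op p (map (subst \<sigma>) es)"
| "subst \<sigma> (Eq a b) = Eq (subst \<sigma> a) (subst \<sigma> b)"
| "subst \<sigma> FALSE = FALSE"
| "subst \<sigma> (Imp a b) = Imp (subst \<sigma> a) (subst \<sigma> b)"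
| "subst \<sigma> (All x e) =
     (let C = (\<Union>z \<in> fv e - {x}. fv (\<sigma> z));
          y = (if x \<in> C then fresh (fv e \<union> C) else x)
      in All y (subst (\<sigma>(x := RVar y)) e))"
| "subst \<sigma> (Nabla e) = Nabla (subst \<sigma> e)"
| "subst \<sigma> (Def d es) = Def d (map (subst \<sigma>) es)"

definition mk_sub :: "nat list \<Rightarrow> ('v, 'o, 'd) expr list \<Rightarrow> nat \<Rightarrow> ('v, 'o, 'd) expr" where
  "mk_sub xs es = (\<lambda>z. case map_of (zip xs es) z of Some e \<Rightarrow> e | None \<Rightarrow> RVar z)"

text \<open>A definition context is a list of definitions (d, [x1..xn], e), the most
  recent one first.  find_def returns parameters, body and the older definitions.\<close>
type_synonym ('v, 'o, 'd) defs = "('d \<times> nat list \<times> ('v, 'o, 'd) expr) list"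

fun find_def :: "'d \<Rightarrow> ('v, 'o, 'd) defs \<Rightarrow> (nat list \<times> ('v, 'o, 'd) expr \<times> ('v, 'o, 'd) defs) option" where
  "find_def d [] = None"
| "find_def d ((d', xs, b) # ds) = (if d = d' then Some (xs, b, ds) else find_def d ds)"

lemma find_def_shorter:
  "find_def d ds = Some t \<Longrightarrow> length (snd (snd t)) < length ds"
  by (induction d ds rule: find_def.induct) (auto split: if_splits)

fun wf_expr :: "('o \<Rightarrow> nat) \<Rightarrow> ('v, 'o, 'd) defs \<Rightarrow> ('v, 'o, 'd) expr \<Rightarrow> bool" where
  "wf_expr ar ds (RVar x) = True"
| "wf_expr ar ds (FVar v) = True"
| "wf_expr ar ds (Op p es) = (length es = ar p \<and> (\<forall>e \<in> set es. wf_expr ar ds e))"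
| "wf_expr ar ds (Eq a b) = (wf_expr ar ds a \<and> wf_expr ar ds b)"
| "wf_expr ar ds FALSE = True"
| "wf_expr ar ds (Imp a b) = (wf_expr ar ds a \<and> wf_expr ar ds b)"
| "wf_expr ar ds (All x e) = wf_expr ar ds e"
| "wf_expr ar ds (Nabla e) = wf_expr ar ds e"
| "wf_expr ar ds (Def d es) =
     ((case find_def d ds of None \<Rightarrow> False | Some t \<Rightarrow> length es = length (fst t))
      \<and> (\<forall>e \<in> set es. wf_expr ar ds e))"

fun wf_defs :: "('o \<Rightarrow> nat) \<Rightarrow> ('v, 'o, 'd) defs \<Rightarrow> bool" where
  "wf_defs ar [] = True"
| "wf_defs ar ((d, xs, b) # ds) =
     (wf_defs ar ds \<and> find_def d ds = None \<and> distinct xs \<and> wf_expr ar ds b \<and> fv b \<subseteq> set xs)"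

function expand :: "('v, 'o, 'd) defs \<Rightarrow> ('v, 'o, 'd) expr \<Rightarrow> ('v, 'o, 'd) expr" where
  "expand ds (RVar x) = RVar x"
| "expand ds (FVar v) = FVar v"
| "expand ds (Op p es) = Op p (map (expand ds) es)"
| "expand ds (Eq a b) = Eq (expand ds a) (expand ds b)"
| "expand ds FALSE = FALSE"
| "expand ds (Imp a b) = Imp (expand ds a) (expand ds b)"
| "expand ds (All x e) = All x (expand ds e)"
| "expand ds (Nabla e) = Nabla (expand ds e)"
| "expand ds (Def d es) =
     (case find_def d ds of
        None \<Rightarrow> Def d (map (expand ds) es)
      | Some t \<Rightarrow> subst (mk_sub (fst t) (map (expand ds) es)) (expand (snd (snd t)) (fst (snd t))))"
  by pat_completeness auto
termination
  by (relation "measures [\<lambda>(ds, e). length ds, \<lambda>(ds, e). size e]")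
     (auto dest: find_def_shorter simp: le_imp_less_Suc size_list_estimation')

fun no_flex_nabla :: "('v, 'o, 'd) expr \<Rightarrow> bool" where
  "no_flex_nabla (RVar x) = True"
| "no_flex_nabla (FVar v) = False"
| "no_flex_nabla (Op p es) = (\<forall>e \<in> set es. no_flex_nabla e)"
| "no_flex_nabla (Eq a b) = (no_flex_nabla a \<and> no_flex_nabla b)"
| "no_flex_nabla FALSE = True"
| "no_flex_nabla (Imp a b) = (no_flex_nabla a \<and> no_flex_nabla b)"
| "no_flex_nabla (All x e) = no_flex_nabla e"
| "no_flex_nabla (Nabla e) = False"
| "no_flex_nabla (Def d es) = (\<forall>e \<in> set es. no_flex_nabla e)"

definition rigid :: "('v, 'o, 'd) defs \<Rightarrow> ('v, 'o, 'd) expr \<Rightarrow> bool" where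
  "rigid ds e \<longleftrightarrow> no_flex_nabla (expand ds e)"

record ('o, 'v, 'u, 's) kmodel =
  interp :: "'o \<Rightarrow> 'u list \<Rightarrow> 'u"
  tt :: 'u
  ff :: 'u
  xi :: "nat \<Rightarrow> 'u"
  W :: "'s set"
  R :: "('s \<times> 's) set"
  zeta :: "'v \<Rightarrow> 's \<Rightarrow> 'u"
  nab :: "'u set \<Rightarrow> 'u"

definition kripke_model :: "('o, 'v, 'u, 's) kmodel \<Rightarrow> bool" where
  "kripke_model M \<longleftrightarrow> tt M \<noteq> ff M \<and> W M \<noteq> {} \<and> R M \<subseteq> W M \<times> W M
     \<and> (\<forall>S. nab M S = tt M \<longleftrightarrow> S \<subseteq> {tt M})"

text \<open>sem_rel ds M e f: f maps a rigid valuation and a state to the value of e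
  (literal transcription of the paper's clauses; defined operators are evaluated by
  evaluating the substituted body).\<close>
inductive sem_rel :: "('v, 'o, 'd) defs \<Rightarrow> ('o, 'v, 'u, 's) kmodel \<Rightarrow> ('v, 'o, 'd) expr
                       \<Rightarrow> ((nat \<Rightarrow> 'u) \<Rightarrow> 's \<Rightarrow> 'u) \<Rightarrow> bool"
  for ds M where
  "sem_rel ds M (RVar x) (\<lambda>\<xi> w. \<xi> x)"
| "sem_rel ds M (FVar v) (\<lambda>\<xi> w. zeta M v w)"
| "list_all2 (sem_rel ds M) es fs \<Longrightarrow>
     sem_rel ds M (Op p es) (\<lambda>\<xi> w. interp M p (map (\<lambda>f. f \<xi> w) fs))"
| "sem_rel ds M a f \<Longrightarrow> sem_rel ds M b g \<Longrightarrow>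
     sem_rel ds M (Eq a b) (\<lambda>\<xi> w. if f \<xi> w = g \<xi> w then tt M else ff M)"
| "sem_rel ds M FALSE (\<lambda>\<xi> w. ff M)"
| "sem_rel ds M a f \<Longrightarrow> sem_rel ds M b g \<Longrightarrow>
     sem_rel ds M (Imp a b) (\<lambda>\<xi> w. if f \<xi> w \<noteq> tt M \<or> g \<xi> w = tt M then tt M else ff M)"
| "sem_rel ds M e f \<Longrightarrow>
     sem_rel ds M (All x e) (\<lambda>\<xi> w. if (\<forall>a. f (\<xi>(x := a)) w = tt M) then tt M else ff M)"
| "sem_rel ds M e f \<Longrightarrow>
     sem_rel ds M (Nabla e) (\<lambda>\<xi> w. nab M {f \<xi> w' | w'. (w, w') \<in> R M})"
| "find_def d ds = Some (xs, b, ds') \<Longrightarrow> sem_rel ds M (subst (mk_sub xs es) b) f \<Longrightarrow>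
     sem_rel ds M (Def d es) f"

definition eval :: "('v, 'o, 'd) defs \<Rightarrow> ('o, 'v, 'u, 's) kmodel \<Rightarrow> 's \<Rightarrow> ('v, 'o, 'd) expr \<Rightarrow> 'u" where
  "eval ds M w e = (THE f. sem_rel ds M e f) (xi M) w"

end

theory Submission
  imports Defs
begin

function den :: "('o, 'v, 'u, 's) kmodel \<Rightarrow> ('v, 'o, 'd) defs \<Rightarrow> ('v, 'o, 'd) expr \<Rightarrow> (nat \<Rightarrow> 's \<Rightarrow> 'u) \<Rightarrow> 's \<Rightarrow> 'u" where
  "den M ds (RVar x) \<rho> w = \<rho> x w"
| "den M ds (FVar v) \<rho> w = zeta M v w"
| "den M ds (Op p es) \<rho> w = interp M p (map (\<lambda>e. den M ds e \<rho> w) es)"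
| "den M ds (Eq a b) \<rho> w = (if den M ds a \<rho> w = den M ds b \<rho> w then tt M else ff M)"
| "den M ds FALSE \<rho> w = ff M"
| "den M ds (Imp a b) \<rho> w = (if den M ds a \<rho> w \<noteq> tt M \<or> den M ds b \<rho> w = tt M then tt M else ff M)"
| "den M ds (All x e) \<rho> w = (if (\<forall>a. den M ds e (\<rho>(x := (\<lambda>_. a))) w = tt M) then tt M else ff M)"
| "den M ds (Nabla e) \<rho> w = nab M {den M ds e \<rho> w' | w'. (w, w') \<in> R M}"
| "den M ds (Def d es) \<rho> w =
     (case find_def d ds of None \<Rightarrow> undefined
      | Some t \<Rightarrow> den M (snd (snd t)) (fst (snd t))
          (\<lambda>z. case map_of (zip (fst t) (map (\<lambda>e. (\<lambda>w'. den M ds e \<rho> w')) es)) z of Some f \<Rightarrow> f | None \<Rightarrow> \<rho> z) w)"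
  by pat_completeness auto
termination
  by (relation "measures [\<lambda>(M, ds, e, \<rho>, w). length ds, \<lambda>(M, ds, e, \<rho>, w). size e]")
     (auto dest: find_def_shorter simp: le_imp_less_Suc size_list_estimation')


lemma finite_fv: "finite (fv e)"
  by (induction e) auto

lemma fresh_notin: "finite S \<Longrightarrow> fresh S \<notin> S"
  proof
  assume "finite S" "fresh S \<in> S"
  then have "fresh S \<le> Max (insert 0 S)" by (intro Max_ge) auto
  then show False unfolding fresh_def by simp
qed

lemma find_def_tail:
  "wf_defs ar ds \<Longrightarrow> find_def d ds = Some (xs, b, ds') \<Longrightarrow>
   wf_defs ar ds' \<and> wf_expr ar ds' b \<and> fv b \<subseteq> set xs \<and>
   (\<forall>d'' t. find_def d'' ds' = Some t \<longrightarrow> find_def d'' ds = Some t)"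
proof (induction ds)
  case Nil then show ?case by simp
next
  case (Cons a ds)
  obtain d0 xs0 b0 where a: "a = (d0, xs0, b0)" by (cases a) auto
  show ?case
  proof (cases "d = d0")
    case True
    have h: "wf_defs ar ds" "find_def d0 ds = None" "distinct xs0" "wf_expr ar ds b0" "fv b0 \<subseteq> set xs0"
      using Cons.prems(1) a by simp_all
    have e: "xs = xs0" "b = b0" "ds' = ds" using Cons.prems(2) a True by simp_all
    have "\<forall>d'' t. find_def d'' ds = Some t \<longrightarrow> find_def d'' (a # ds) = Some t"
    proof (intro allI impI)
      fix d'' t assume "find_def d'' ds = Some t"
      then have "d'' \<noteq> d0" using h(2) by auto
      then show "find_def d'' (a # ds) = Some t" using a \<open>find_def d'' ds = Some t\<close> by simp
    qed
    then show ?thesis using h e by simp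
  next
    case False
    have h: "wf_defs ar ds" "find_def d0 ds = None" using Cons.prems(1) a by simp_all
    have f: "find_def d ds = Some (xs, b, ds')" using Cons.prems(2) a False by simp
    have IH: "wf_defs ar ds' \<and> wf_expr ar ds' b \<and> fv b \<subseteq> set xs \<and>
      (\<forall>d'' t. find_def d'' ds' = Some t \<longrightarrow> find_def d'' ds = Some t)"
      using Cons.IH[OF h(1) f] .
    have "\<forall>d'' t. find_def d'' ds' = Some t \<longrightarrow> find_def d'' (a # ds) = Some t"
    proof (intro allI impI)
      fix d'' t assume "find_def d'' ds' = Some t"
      then have "find_def d'' ds = Some t" using IH by blast
      then have "d'' \<noteq> d0" using h(2) by auto
      then show "find_def d'' (a # ds) = Some t" using a \<open>find_def d'' ds = Some t\<close> by simp
    qed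
    then show ?thesis using IH by blast
  qed
qed

lemma wf_mono:
  "(\<forall>d t. find_def d ds1 = Some t \<longrightarrow> find_def d ds = Some t) \<Longrightarrow> wf_expr ar ds1 e \<Longrightarrow> wf_expr ar ds e"
  by (induction e) (auto split: option.splits)

lemma map_of_zip_map:
  "map_of (zip xs (map g es)) z = map_option g (map_of (zip xs es) z)"
  by (induction xs arbitrary: es) (auto simp: zip_Cons1 split: list.splits)

lemma map_of_zip_in:
  "length xs = length es \<Longrightarrow> z \<in> set xs \<Longrightarrow> map_of (zip xs es) z \<noteq> None"
  by (simp add: domIff[symmetric] dom_map_of_zip)

lemma den_xi: "den (M\<lparr>xi := X\<rparr>) ds e \<rho> w = den M ds e \<rho> w"
proof (induction M ds e \<rho> w rule: den.induct)
  case (3 M ds p es \<rho> w)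
  then show ?case by (simp cong: map_cong)
next
  case (7 M ds x e \<rho> w)
  then show ?case by (simp add: fun_upd_def)
next
  case (8 M ds e \<rho> w)
  then show ?case by simp
next
  case (9 M ds d es \<rho> w)
  show ?case
  proof (cases "find_def d ds")
    case None then show ?thesis by simp
  next
    case (Some t)
    obtain a aa b where t: "t = (a, aa, b)" by (cases t) auto
    have eq: "map (\<lambda>e. den (M\<lparr>xi := X\<rparr>) ds e \<rho>) es = map (\<lambda>e. den M ds e \<rho>) es"
      using 9(1)[OF Some[unfolded t]] by (intro map_cong refl ext) auto
    show ?thesis using 9(2)[OF Some[unfolded t]] Some t by (simp add: eq)
  qed
qed simp_all

lemma env_eq:
  assumes "length xs = length L" "z \<in> set xs"
  shows "(case map_of (zip xs L) z of Some f \<Rightarrow> f | None \<Rightarrow> r1 z) =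
         (case map_of (zip xs L) z of Some f \<Rightarrow> f | None \<Rightarrow> r2 z)"
  using map_of_zip_in[OF assms] by (auto split: option.split)

lemma den_cong:
  "wf_defs ar ds \<Longrightarrow> wf_expr ar ds e \<Longrightarrow> (\<forall>z\<in>fv e. \<rho> z = \<rho>' z) \<Longrightarrow> den M ds e \<rho> w = den M ds e \<rho>' w"
proof (induction "length ds" arbitrary: ds e \<rho> \<rho>' w rule: less_induct)
  case less
  from less.prems show ?case
  proof (induction e arbitrary: \<rho> \<rho>' w)
    case (Op p es)
    then show ?case by (auto intro!: arg_cong[where f="interp M p"] map_cong)
  next
    case (Eq a b)
    have "den M ds a \<rho> w = den M ds a \<rho>' w" "den M ds b \<rho> w = den M ds b \<rho>' w"
      using Eq by (intro Eq.IH; auto)+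
    then show ?case by simp
  next
    case (Imp a b)
    have "den M ds a \<rho> w = den M ds a \<rho>' w" "den M ds b \<rho> w = den M ds b \<rho>' w"
      using Imp by (intro Imp.IH; auto)+
    then show ?case by simp
  next
    case (All x e)
    have "\<And>a. den M ds e (\<rho>(x := \<lambda>_. a)) w = den M ds e (\<rho>'(x := \<lambda>_. a)) w"
      using All by (intro All.IH) auto
    then show ?case by simp
  next
    case (Nabla e)
    have "\<And>w'. den M ds e \<rho> w' = den M ds e \<rho>' w'" using Nabla by (intro Nabla.IH) auto
    then show ?case by simp
  next
    case (Def d es)
    from Def.prems obtain t where t: "find_def d ds = Some t" "length es = length (fst t)"
      by (auto split: option.splits)
    obtain xs b ds' where tt: "t = (xs, b, ds')" by (cases t) auto
    have tl: "wf_defs ar ds' \<and> wf_expr ar ds' b \<and> fv b \<subseteq> set xs"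
      using find_def_tail[OF Def.prems(1) t(1)[unfolded tt]] by blast
    have sh: "length ds' < length ds" using find_def_shorter[OF t(1)] tt by simp
    have eq: "map (\<lambda>e. den M ds e \<rho>) es = map (\<lambda>e. den M ds e \<rho>') es"
    proof (intro map_cong refl ext)
      fix e w assume "e \<in> set es"
      then show "den M ds e \<rho> w = den M ds e \<rho>' w"
        using Def.IH[of e \<rho> \<rho>' w] Def.prems by auto
    qed
    have "den M ds' b
          (\<lambda>z. case map_of (zip xs (map (\<lambda>e. den M ds e \<rho>) es)) z of Some f \<Rightarrow> f | None \<Rightarrow> \<rho> z) w =
          den M ds' b
          (\<lambda>z. case map_of (zip xs (map (\<lambda>e. den M ds e \<rho>') es)) z of Some f \<Rightarrow> f | None \<Rightarrow> \<rho>' z) w"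
      unfolding eq
      apply (rule less.hyps[OF sh])
      using tl t(2) tt apply simp_all
      using env_eq[of xs "map (\<lambda>e. den M ds e \<rho>') es"] by auto
    then show ?case using t tt by simp
  qed simp_all
qed

lemma den_ds:
  "(\<forall>d t. find_def d ds1 = Some t \<longrightarrow> find_def d ds = Some t) \<Longrightarrow> wf_expr ar ds1 e \<Longrightarrow>
   den M ds e \<rho> w = den M ds1 e \<rho> w"
proof (induction e arbitrary: \<rho> w)
  case (Op p es)
  then show ?case by (auto intro!: arg_cong[where f="interp M p"] map_cong)
next
  case (Eq a b)
  then show ?case by simp
next
  case (Imp a b)
  then show ?case by simp
next
  case (All x e)
  then show ?case by simp
next
  case (Nabla e)
  then show ?case by simp
next
  case (Def d es)
  from Def.prems obtain t where t: "find_def d ds1 = Some t"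
    by (auto split: option.splits)
  then have t2: "find_def d ds = Some t" using Def.prems(1) by blast
  have eq: "map (\<lambda>e. den M ds e \<rho>) es = map (\<lambda>e. den M ds1 e \<rho>) es"
  proof (intro map_cong refl ext)
    fix e w assume "e \<in> set es"
    then show "den M ds e \<rho> w = den M ds1 e \<rho> w"
      using Def.IH[of e \<rho> w] Def.prems by auto
  qed
  show ?case using t t2 by (simp add: eq)
qed simp_all

lemma wf_subst:
  "wf_expr ar ds b \<Longrightarrow> (\<forall>z. wf_expr ar ds (\<sigma> z)) \<Longrightarrow> wf_expr ar ds (subst \<sigma> b)"
proof (induction b arbitrary: \<sigma>)
  case (All x e)
  then show ?case by (simp add: Let_def)
qed (auto split: option.splits)

lemma fv_C:
  assumes "z \<in> fv e - {x}"
  shows "x \<notin> (\<Union>z \<in> fv e - {x}. fv (\<sigma> z)) \<Longrightarrow> x \<notin> fv (\<sigma> z)"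
    and "fresh (fv e \<union> (\<Union>z \<in> fv e - {x}. fv (\<sigma> z))) \<notin> fv (\<sigma> z)"
proof -
  show "x \<notin> (\<Union>z \<in> fv e - {x}. fv (\<sigma> z)) \<Longrightarrow> x \<notin> fv (\<sigma> z)" using assms by blast
  have "finite (fv e \<union> (\<Union>z \<in> fv e - {x}. fv (\<sigma> z)))" by (simp add: finite_fv)
  from fresh_notin[OF this] show "fresh (fv e \<union> (\<Union>z \<in> fv e - {x}. fv (\<sigma> z))) \<notin> fv (\<sigma> z)"
    using assms by blast
qed

lemma den_subst:
  "wf_defs ar ds \<Longrightarrow> wf_expr ar ds b \<Longrightarrow> (\<forall>z. wf_expr ar ds (\<sigma> z)) \<Longrightarrow>
   den M ds (subst \<sigma> b) \<rho> w = den M ds b (\<lambda>z. den M ds (\<sigma> z) \<rho>) w"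
proof (induction b arbitrary: \<sigma> \<rho> w)
  case (Op p es)
  then show ?case by (auto intro!: arg_cong[where f="interp M p"] map_cong)
next
  case (Eq a b)
  then show ?case by simp
next
  case (Imp a b)
  then show ?case by simp
next
  case (Nabla e)
  then show ?case by simp
next
  case (All x e)
  define C where "C = (\<Union>z \<in> fv e - {x}. fv (\<sigma> z))"
  define y where "y = (if x \<in> C then fresh (fv e \<union> C) else x)"
  have s: "subst \<sigma> (All x e) = All y (subst (\<sigma>(x := RVar y)) e)"
    by (simp add: Let_def C_def y_def)
  have ny: "y \<notin> fv (\<sigma> z)" if "z \<in> fv e - {x}" for z
    using fv_C[OF that, of \<sigma>] unfolding y_def C_def by auto
  have wfs: "\<forall>z. wf_expr ar ds ((\<sigma>(x := RVar y)) z)" using All.prems by simp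
  have key: "den M ds (subst (\<sigma>(x := RVar y)) e) (\<rho>(y := \<lambda>_. a)) w =
             den M ds e ((\<lambda>z. den M ds (\<sigma> z) \<rho>)(x := \<lambda>_. a)) w" for a
  proof -
    have "den M ds (subst (\<sigma>(x := RVar y)) e) (\<rho>(y := \<lambda>_. a)) w =
          den M ds e (\<lambda>z. den M ds ((\<sigma>(x := RVar y)) z) (\<rho>(y := \<lambda>_. a))) w"
      by (rule All.IH[OF All.prems(1) _ wfs]) (use All.prems(2) in simp)
    also have "\<dots> = den M ds e ((\<lambda>z. den M ds (\<sigma> z) \<rho>)(x := \<lambda>_. a)) w"
    proof (rule den_cong[OF All.prems(1)])
      show "wf_expr ar ds e" using All.prems(2) by simp
      show "\<forall>z\<in>fv e. den M ds ((\<sigma>(x := RVar y)) z) (\<rho>(y := \<lambda>_. a)) =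
                      ((\<lambda>z. den M ds (\<sigma> z) \<rho>)(x := \<lambda>_. a)) z"
      proof
        fix z assume z: "z \<in> fv e"
        show "den M ds ((\<sigma>(x := RVar y)) z) (\<rho>(y := \<lambda>_. a)) =
                      ((\<lambda>z. den M ds (\<sigma> z) \<rho>)(x := \<lambda>_. a)) z"
        proof (cases "z = x")
          case True then show ?thesis by (auto intro!: ext)
        next
          case False
          then have "z \<in> fv e - {x}" using z by simp
          note ny[OF this]
          then show ?thesis using False All.prems(3)
            by (auto intro!: ext den_cong[OF All.prems(1)])
        qed
      qed
    qed
    finally show ?thesis .
  qed
  show ?case unfolding s using key by simp
next
  case (Def d es)
  from Def.prems obtain t where t: "find_def d ds = Some t" "length es = length (fst t)"
    by (auto split: option.splits)
  obtain xs b ds' where tt: "t = (xs, b, ds')" by (cases t) auto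
  have tl: "wf_defs ar ds' \<and> wf_expr ar ds' b \<and> fv b \<subseteq> set xs"
    using find_def_tail[OF Def.prems(1) t(1)[unfolded tt]] by blast
  have eq: "map (\<lambda>e. den M ds e \<rho>) (map (subst \<sigma>) es) = map (\<lambda>e. den M ds e (\<lambda>z. den M ds (\<sigma> z) \<rho>)) es"
    unfolding map_map
  proof (intro map_cong refl ext)
    fix e w assume "e \<in> set es"
    then show "((\<lambda>e. den M ds e \<rho>) \<circ> subst \<sigma>) e w = den M ds e (\<lambda>z. den M ds (\<sigma> z) \<rho>) w"
      using Def.IH[of e \<sigma> \<rho> w] Def.prems by auto
  qed
  have "den M ds' b
        (\<lambda>z. case map_of (zip xs (map (\<lambda>e. den M ds e \<rho>) (map (subst \<sigma>) es))) z of Some f \<Rightarrow> f | None \<Rightarrow> \<rho> z) w =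
        den M ds' b
        (\<lambda>z. case map_of (zip xs (map (\<lambda>e. den M ds e (\<lambda>z. den M ds (\<sigma> z) \<rho>)) es)) z of Some f \<Rightarrow> f
             | None \<Rightarrow> den M ds (\<sigma> z) \<rho>) w"
    unfolding eq
    apply (rule den_cong)
    using tl t(2) tt apply simp_all
    using env_eq[of xs "map (\<lambda>e. den M ds e (\<lambda>z. den M ds (\<sigma> z) \<rho>)) es" _ \<rho> "\<lambda>z. den M ds (\<sigma> z) \<rho>"] by auto
  then show ?case using t tt by simp
qed simp_all

lemma mk_sub_den:
  "den M ds (mk_sub xs es z) \<rho> =
   (case map_of (zip xs (map (\<lambda>e. den M ds e \<rho>) es)) z of Some f \<Rightarrow> f | None \<Rightarrow> \<rho> z)"
  unfolding mk_sub_def map_of_zip_map by (auto split: option.split intro!: ext)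

lemma mk_sub_cases:
  "mk_sub xs es z \<in> set es \<or> mk_sub xs es z = RVar z"
  unfolding mk_sub_def by (auto split: option.split dest: map_of_SomeD set_zip_rightD)

lemma subst_id: "subst RVar e = e"
proof (induction e)
  case (Op p es) then show ?case by (simp add: map_idI)
next
  case (All x e) then show ?case by (simp add: Let_def fun_upd_idem)
next
  case (Def d es) then show ?case by (simp add: map_idI)
qed simp_all

lemma upd_lam: "(\<lambda>z _. if z = x then a else \<xi> z) = (\<lambda>z _. \<xi> z)(x := \<lambda>_. a)"
  by (auto intro!: ext)

lemma sem_rel_den:
  assumes wfd: "wf_defs ar ds"
  shows "sem_rel ds M e f \<Longrightarrow> wf_expr ar ds e \<Longrightarrow> f = (\<lambda>\<xi> w. den M ds e (\<lambda>z _. \<xi> z) w)"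
proof (induction rule: sem_rel.induct)
  case (3 es fs p)
  have "list_all2 (\<lambda>e f. f = (\<lambda>\<xi> w. den M ds e (\<lambda>z _. \<xi> z) w)) es fs"
    using 3 by (auto simp: list_all2_conv_all_nth)
  then have "map (\<lambda>f. f \<xi> w) fs = map (\<lambda>e. den M ds e (\<lambda>z _. \<xi> z) w) es" for \<xi> w
    by (auto simp: list_all2_conv_all_nth intro!: nth_equalityI)
  then show ?case by (auto intro!: ext)
next
  case (7 e f x)
  then have f: "f = (\<lambda>\<xi> w. den M ds e (\<lambda>z _. \<xi> z) w)" by simp
  show ?case using f by (auto intro!: ext simp: upd_lam)
next
  case (8 e f)
  then show ?case by (auto intro!: ext)
next
  case (9 d xs b ds' es f)
  have tl: "wf_defs ar ds' \<and> wf_expr ar ds' b \<and> fv b \<subseteq> set xs \<and>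
      (\<forall>d'' t. find_def d'' ds' = Some t \<longrightarrow> find_def d'' ds = Some t)"
    using find_def_tail[OF wfd 9(1)] .
  have wfes: "\<forall>e\<in>set es. wf_expr ar ds e" using 9(4) by simp
  have wfs: "\<forall>z. wf_expr ar ds (mk_sub xs es z)"
    using mk_sub_cases wfes by (metis wf_expr.simps(1))
  have wfb: "wf_expr ar ds b" using wf_mono tl by blast
  have f: "f = (\<lambda>\<xi> w. den M ds (subst (mk_sub xs es) b) (\<lambda>z _. \<xi> z) w)"
    using 9(3) wf_subst[OF wfb wfs] by blast
  show ?case
  proof (intro ext)
    fix \<xi> w
    have "f \<xi> w = den M ds b (\<lambda>z. den M ds (mk_sub xs es z) (\<lambda>z _. \<xi> z)) w"
      using f den_subst[OF wfd wfb wfs] by simp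
    also have "\<dots> = den M ds' b (\<lambda>z. den M ds (mk_sub xs es z) (\<lambda>z _. \<xi> z)) w"
      by (rule den_ds) (use tl in auto)
    also have "\<dots> = den M ds (Def d es) (\<lambda>z _. \<xi> z) w"
      using 9(1) by (simp add: mk_sub_den)
    finally show "f \<xi> w = den M ds (Def d es) (\<lambda>z _. \<xi> z) w" .
  qed
qed (auto intro!: ext)

lemma ex_list_all2: "(\<forall>e\<in>set es. \<exists>f. P e f) \<Longrightarrow> \<exists>fs. list_all2 P es fs"
proof (induction es)
  case Nil then show ?case by auto
next
  case (Cons a es)
  then obtain f fs where "P a f" "list_all2 P es fs" by auto
  then show ?case by (intro exI[of _ "f # fs"]) auto
qed

lemma sem_ex:
  assumes wfd: "wf_defs ar ds"
  shows "wf_defs ar ds1 \<Longrightarrow> (\<forall>d t. find_def d ds1 = Some t \<longrightarrow> find_def d ds = Some t) \<Longrightarrow>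
    wf_expr ar ds1 b \<Longrightarrow> (\<forall>z. \<exists>f. sem_rel ds M (\<sigma> z) f) \<Longrightarrow> \<exists>f. sem_rel ds M (subst \<sigma> b) f"
proof (induction "length ds1" arbitrary: ds1 b \<sigma> rule: less_induct)
  case less
  from less.prems show ?case
  proof (induction b arbitrary: \<sigma>)
    case (RVar x)
    then show ?case by simp
  next
    case (FVar v)
    then show ?case by (auto intro: sem_rel.intros)
  next
    case (Op p es)
    then have "\<forall>e\<in>set (map (subst \<sigma>) es). \<exists>f. sem_rel ds M e f" by auto
    then obtain fs where "list_all2 (sem_rel ds M) (map (subst \<sigma>) es) fs"
      using ex_list_all2 by blast
    then show ?case by (auto intro: sem_rel.intros)
  next
    case (Eq a b)
    then have "wf_expr ar ds1 a" "wf_expr ar ds1 b" by simp_all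
    then obtain f g where "sem_rel ds M (subst \<sigma> a) f" "sem_rel ds M (subst \<sigma> b) g"
      using Eq by blast
    then show ?case by (auto intro: sem_rel.intros)
  next
    case FALSE
    then show ?case by (auto intro: sem_rel.intros)
  next
    case (Imp a b)
    then have "wf_expr ar ds1 a" "wf_expr ar ds1 b" by simp_all
    then obtain f g where "sem_rel ds M (subst \<sigma> a) f" "sem_rel ds M (subst \<sigma> b) g"
      using Imp by blast
    then show ?case by (auto intro: sem_rel.intros)
  next
    case (All x e)
    then have "\<exists>f. sem_rel ds M (subst (\<sigma>(x := RVar y)) e) f" for y
      by (intro All.IH) (auto intro: sem_rel.intros)
    then have "\<exists>f. sem_rel ds M (All y (subst (\<sigma>(x := RVar y)) e)) f" for y
      by (meson sem_rel.intros(7))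
    then show ?case by (simp add: Let_def)
  next
    case (Nabla e)
    then have "wf_expr ar ds1 e" by simp
    then obtain f where "sem_rel ds M (subst \<sigma> e) f" using Nabla by blast
    then show ?case by (auto intro: sem_rel.intros)
  next
    case (Def d es)
    from Def.prems obtain t where t: "find_def d ds1 = Some t"
      by (auto split: option.splits)
    obtain xs b ds' where tt: "t = (xs, b, ds')" by (cases t) auto
    have tl: "wf_defs ar ds' \<and> wf_expr ar ds' b \<and> fv b \<subseteq> set xs \<and>
      (\<forall>d'' t. find_def d'' ds' = Some t \<longrightarrow> find_def d'' ds1 = Some t)"
      using find_def_tail[OF Def.prems(1) t[unfolded tt]] .
    have sh: "length ds' < length ds1" using find_def_shorter[OF t] tt by simp
    have t2: "find_def d ds = Some (xs, b, ds')" using t tt Def.prems(2) by blast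
    have exs: "\<forall>z. \<exists>f. sem_rel ds M (mk_sub xs (map (subst \<sigma>) es) z) f"
    proof
      fix z
      show "\<exists>f. sem_rel ds M (mk_sub xs (map (subst \<sigma>) es) z) f"
      proof (cases "mk_sub xs (map (subst \<sigma>) es) z = RVar z")
        case True then show ?thesis by (auto intro: sem_rel.intros)
      next
        case False
        then obtain e where "e \<in> set es" "mk_sub xs (map (subst \<sigma>) es) z = subst \<sigma> e"
          using mk_sub_cases[of xs "map (subst \<sigma>) es" z] by auto
        then show ?thesis using Def.IH[of e \<sigma>] Def.prems by auto
      qed
    qed
    have "\<exists>f. sem_rel ds M (subst (mk_sub xs (map (subst \<sigma>) es)) b) f"
      using less.hyps[OF sh, of b "mk_sub xs (map (subst \<sigma>) es)"] tl Def.prems(2) exs by blast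
    then show ?case using t2 by (auto intro: sem_rel.intros)
  qed
qed

lemma eval_den:
  assumes "wf_defs ar ds" "wf_expr ar ds e"
  shows "eval ds M w e = den M ds e (\<lambda>z _. xi M z) w"
proof -
  obtain f where f: "sem_rel ds M e f"
    using sem_ex[OF assms(1) assms(1) _ assms(2), where \<sigma>=RVar and M=M] subst_id[of e]
    by (auto intro: sem_rel.intros)
  have u: "\<And>g. sem_rel ds M e g \<Longrightarrow> g = (\<lambda>\<xi> w. den M ds e (\<lambda>z _. \<xi> z) w)"
    using sem_rel_den[OF assms(1)] assms(2) by blast
  have "(THE f. sem_rel ds M e f) = (\<lambda>\<xi> w. den M ds e (\<lambda>z _. \<xi> z) w)"
    using f u by (metis the_equality)
  then show ?thesis unfolding eval_def by simp
qed

lemma nfn_subst: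
  "no_flex_nabla (subst \<sigma> t) \<Longrightarrow> no_flex_nabla t \<and> (\<forall>z\<in>fv t. no_flex_nabla (\<sigma> z))"
proof (induction t arbitrary: \<sigma>)
  case (All x e)
  obtain y where s: "subst \<sigma> (All x e) = All y (subst (\<sigma>(x := RVar y)) e)" by (simp add: Let_def)
  have "no_flex_nabla (subst (\<sigma>(x := RVar y)) e)" using All.prems s by simp
  from All.IH[OF this] have h: "no_flex_nabla e \<and> (\<forall>z\<in>fv e. no_flex_nabla ((\<sigma>(x := RVar y)) z))" .
  show ?case
  proof (intro conjI ballI)
    show "no_flex_nabla (All x e)" using h by simp
    fix z assume "z \<in> fv (All x e)"
    then have "z \<in> fv e" "z \<noteq> x" by auto
    then show "no_flex_nabla (\<sigma> z)" using h by (metis fun_upd_other)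
  qed
qed auto

lemma fv_subst:
  "z \<in> fv t \<Longrightarrow> fv (\<sigma> z) \<subseteq> fv (subst \<sigma> t)"
proof (induction t arbitrary: \<sigma>)
  case (All x e)
  define C where "C = (\<Union>z \<in> fv e - {x}. fv (\<sigma> z))"
  define y where "y = (if x \<in> C then fresh (fv e \<union> C) else x)"
  have s: "subst \<sigma> (All x e) = All y (subst (\<sigma>(x := RVar y)) e)"
    by (simp add: Let_def C_def y_def)
  have z: "z \<in> fv e - {x}" using All.prems by simp
  have ny: "y \<notin> fv (\<sigma> z)"
    using fv_C[OF z, of \<sigma>] unfolding y_def C_def by auto
  have "fv ((\<sigma>(x := RVar y)) z) \<subseteq> fv (subst (\<sigma>(x := RVar y)) e)"
    using z by (intro All.IH) auto
  then show ?case unfolding s using z ny by auto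
qed auto

lemma rigid_const:
  "no_flex_nabla (expand ds e) \<Longrightarrow> (\<forall>z\<in>fv (expand ds e). \<exists>c. \<rho> z = (\<lambda>_. c)) \<Longrightarrow>
   den M ds e \<rho> w = den M ds e \<rho> w'"
proof (induction ds e arbitrary: \<rho> w w' rule: expand.induct)
  case (1 ds x)
  then show ?case by auto
next
  case (3 ds p es)
  have eq: "map (\<lambda>e. den M ds e \<rho> w) es = map (\<lambda>e. den M ds e \<rho> w') es"
  proof (intro map_cong refl)
    fix e assume "e \<in> set es"
    then show "den M ds e \<rho> w = den M ds e \<rho> w'" using 3 by (intro 3(1)) auto
  qed
  show ?case by (simp only: den.simps eq)
next
  case (4 ds a b)
  have "den M ds a \<rho> w = den M ds a \<rho> w'" "den M ds b \<rho> w = den M ds b \<rho> w'"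
    using 4 by (intro 4(1) 4(2); auto)+
  then show ?case by simp
next
  case (6 ds a b)
  have "den M ds a \<rho> w = den M ds a \<rho> w'" "den M ds b \<rho> w = den M ds b \<rho> w'"
    using 6 by (intro 6(1) 6(2); auto)+
  then show ?case by simp
next
  case (7 ds x e)
  have "\<And>a. den M ds e (\<rho>(x := \<lambda>_. a)) w = den M ds e (\<rho>(x := \<lambda>_. a)) w'"
    using 7 by (intro 7(1)) auto
  then show ?case by simp
next
  case (9 ds d es)
  have ih_es: "\<And>t e \<rho> w w'. find_def d ds = Some t \<Longrightarrow> e \<in> set es \<Longrightarrow> no_flex_nabla (expand ds e) \<Longrightarrow>
     (\<forall>z\<in>fv (expand ds e). \<exists>c. \<rho> z = (\<lambda>_. c)) \<Longrightarrow> den M ds e \<rho> w = den M ds e \<rho> w'"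
    using 9 by blast
  have ih_b: "den M ds' b \<rho> w = den M ds' b \<rho> w'" if a: "find_def d ds = Some (xs, b, ds')" "no_flex_nabla (expand ds' b)"
     "\<forall>z\<in>fv (expand ds' b). \<exists>c. \<rho> z = (\<lambda>_. c)" for xs b ds' \<rho> w w'
    using 9(3)[of "(xs, b, ds')" \<rho> w w'] a by simp
  show ?case
  proof (cases "find_def d ds")
    case None then show ?thesis by simp
  next
    case (Some t)
    obtain xs b ds' where tt: "t = (xs, b, ds')" by (cases t) auto
    let ?\<sigma> = "mk_sub xs (map (expand ds) es)"
    have ex: "expand ds (Def d es) = subst ?\<sigma> (expand ds' b)" using Some tt by simp
    have nf: "no_flex_nabla (expand ds' b)" "\<forall>z\<in>fv (expand ds' b). no_flex_nabla (?\<sigma> z)"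
      using nfn_subst[of ?\<sigma> "expand ds' b"] 9(4) ex by auto
    define env where "env = (\<lambda>z. case map_of (zip xs (map (\<lambda>e. den M ds e \<rho>) es)) z of Some f \<Rightarrow> f | None \<Rightarrow> \<rho> z)"
    have "\<exists>c. env z = (\<lambda>_. c)" if z: "z \<in> fv (expand ds' b)" for z
    proof (cases "map_of (zip xs es) z")
      case None
      then have "env z = \<rho> z" "?\<sigma> z = RVar z"
        unfolding env_def mk_sub_def by (simp_all add: map_of_zip_map)
      moreover have "fv (?\<sigma> z) \<subseteq> fv (expand ds (Def d es))" using fv_subst[OF z] ex by simp
      ultimately show ?thesis using 9(5) by auto
    next
      case (Some e)
      then have e: "e \<in> set es" by (auto dest: map_of_SomeD set_zip_rightD)
      have eq: "env z = den M ds e \<rho>" "?\<sigma> z = expand ds e"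
        unfolding env_def mk_sub_def using Some by (simp_all add: map_of_zip_map)
      have "fv (?\<sigma> z) \<subseteq> fv (subst ?\<sigma> (expand ds' b))" by (rule fv_subst[OF z])
      then have fvs: "fv (expand ds e) \<subseteq> fv (expand ds (Def d es))" unfolding ex eq(2) .
      have n1: "no_flex_nabla (expand ds e)" using nf(2) z eq(2) by metis
      have n2: "\<forall>z'\<in>fv (expand ds e). \<exists>c. \<rho> z' = (\<lambda>_. c)" using 9(5) fvs by blast
      have "den M ds e \<rho> w1 = den M ds e \<rho> w2" for w1 w2
        using ih_es[OF \<open>find_def d ds = Some t\<close> e n1 n2] .
      then have "den M ds e \<rho> = (\<lambda>_. den M ds e \<rho> undefined)" by (auto intro!: ext)
      then show ?thesis using eq by auto
    qed
    then have "den M ds' b env w = den M ds' b env w'"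
      using ih_b[of xs b ds' env w w'] \<open>find_def d ds = Some t\<close> tt nf(1) by auto
    then show ?thesis using Some tt by (simp add: env_def)
  qed
qed simp_all

lemma den_xi_fun: "den (M\<lparr>xi := X\<rparr>) = den M"
  by (intro ext) (rule den_xi)

theorem lemma1:
  fixes ar :: "'o \<Rightarrow> nat"
    and ds :: "('v, 'o, 'd) defs"
    and M :: "('o, 'v, 'u, 's) kmodel"
  assumes "wf_defs ar ds"
    and "find_def d ds = Some (xs, b, ds')"
    and "length es = length xs"
    and "\<forall>j < length es. wf_expr ar ds (es ! j)"
    and "i < length es"
    and "rigid ds (es ! i)"
    and "kripke_model M"
    and "w \<in> W M"
    and "\<forall>j < length es. x \<notin> fv (es ! j)"
  shows "eval ds M w (Def d es) =
         eval ds (M\<lparr>xi := (xi M)(x := eval ds M w (es ! i))\<rparr>) w (Def d (es[i := RVar x]))"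
proof -
  note wfd = assms(1)
  let ?es' = "es[i := RVar x]"
  have wfes: "\<forall>e\<in>set es. wf_expr ar ds e" using assms(4) by (auto simp: in_set_conv_nth)
  have wfes': "\<forall>e\<in>set ?es'. wf_expr ar ds e"
    using wfes set_update_subset_insert[of es i "RVar x"] by auto
  have wfD: "wf_expr ar ds (Def d es)" using assms(2,3) wfes by simp
  have wfD': "wf_expr ar ds (Def d ?es')" using assms(2,3) wfes' by simp
  define \<rho>0 where "\<rho>0 = (\<lambda>z (_::'s). xi M z)"
  define v where "v = eval ds M w (es ! i)"
  define \<rho>1 where "\<rho>1 = (\<lambda>z (_::'s). ((xi M)(x := v)) z)"
  have wfi: "wf_expr ar ds (es ! i)" using assms(4,5) by simp
  have v: "v = den M ds (es ! i) \<rho>0 w" unfolding v_def \<rho>0_def by (rule eval_den[OF wfd wfi])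
  have L: "eval ds M w (Def d es) = den M ds (Def d es) \<rho>0 w"
    unfolding \<rho>0_def by (rule eval_den[OF wfd wfD])
  have R: "eval ds (M\<lparr>xi := (xi M)(x := v)\<rparr>) w (Def d ?es') = den M ds (Def d ?es') \<rho>1 w"
    unfolding \<rho>1_def using eval_den[OF wfd wfD', of "M\<lparr>xi := (xi M)(x := v)\<rparr>" w]
    unfolding den_xi_fun by simp
  have lists: "map (\<lambda>e. den M ds e \<rho>0) es = map (\<lambda>e. den M ds e \<rho>1) ?es'"
  proof (rule nth_equalityI)
    show "length (map (\<lambda>e. den M ds e \<rho>0) es) = length (map (\<lambda>e. den M ds e \<rho>1) ?es')" by simp
    fix j assume j: "j < length (map (\<lambda>e. den M ds e \<rho>0) es)"
    then have j': "j < length es" by simp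
    show "map (\<lambda>e. den M ds e \<rho>0) es ! j = map (\<lambda>e. den M ds e \<rho>1) ?es' ! j"
    proof (cases "j = i")
      case True
      have c: "den M ds (es ! i) \<rho>0 w' = den M ds (es ! i) \<rho>0 w" for w'
        by (rule rigid_const) (use assms(6) in \<open>auto simp: rigid_def \<rho>0_def\<close>)
      have "den M ds (es ! i) \<rho>0 = den M ds (RVar x) \<rho>1"
        using c v by (auto intro!: ext simp: \<rho>1_def)
      then show ?thesis using True j' assms(5) by simp
    next
      case False
      have "den M ds (es ! j) \<rho>0 = den M ds (es ! j) \<rho>1"
        by (intro ext den_cong[OF wfd]) (use assms(4,9) j' in \<open>auto simp: \<rho>0_def \<rho>1_def\<close>)
      then show ?thesis using False j' by simp
    qed
  qed
  have tl: "wf_defs ar ds' \<and> wf_expr ar ds' b \<and> fv b \<subseteq> set xs"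
    using find_def_tail[OF wfd assms(2)] by blast
  have "den M ds (Def d es) \<rho>0 w = den M ds (Def d ?es') \<rho>1 w"
  proof -
    have "den M ds' b
        (\<lambda>z. case map_of (zip xs (map (\<lambda>e. den M ds e \<rho>0) es)) z of Some f \<Rightarrow> f | None \<Rightarrow> \<rho>0 z) w =
        den M ds' b
        (\<lambda>z. case map_of (zip xs (map (\<lambda>e. den M ds e \<rho>1) ?es')) z of Some f \<Rightarrow> f | None \<Rightarrow> \<rho>1 z) w"
      unfolding lists
      apply (rule den_cong[where ar=ar])
      using tl assms(3) apply simp_all
      using env_eq[of xs "map (\<lambda>e. den M ds e \<rho>1) ?es'" _ \<rho>0 \<rho>1] assms(3) by auto
    then show ?thesis using assms(2) by simp
  qed
  then show ?thesis using L R unfolding v_def by simp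
qed
end
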